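(* The matrices $\hat U(\gamma_* )=[u_1(\gamma_* )\ \ u_2(\gamma_* )-\theta_*u_1(\gamma_* )]$ and $\hat V(\gamma_* )=[v_1(\gamma_* )\ \ v_2(\gamma_* )-\theta_*v_1(\gamma_* )]$, where $\theta_*=\frac{\gamma_*}{\mu_1-\mu_2}$, satisfy $\hat U(\gamma_* )^*\hat U(\gamma_* )=\hat V(\gamma_* )^*\hat V(\gamma_* )$.
   Context: Let $P(\lambda)=\sum_{j=0}^m A_j\lambda^j$ be an $n\times n$ matrix polynomial with $\det A_m\neq0$, let $\mu_1\neq\mu_2$ be complex numbers, $P[\mu_1,\mu_2]=\frac{P(\mu_1)-P(\mu_2)}{\mu_1-\mu_2}$, and $F[P(\mu_1,\mu_2);\gamma]=\begin{bmatrix} P(\mu_1) & 0\\ \gamma P[\mu_1,\mu_2] & P(\mu_2)\end{bmatrix}$. Assume $\mathrm{rank}(P[\mu_1,\mu_2])\ge2$, let $\gamma_*>0$ be a point where $s_{2n-1}(F[P(\mu_1,\mu_2);\gamma])$ attains its maximum $s_*>0$ over $\gamma\ge0$. Let $\begin{bmatrix} u_1(\gamma_* )\\ u_2(\gamma_* )\end{bmatrix},\begin{bmatrix} v_1(\gamma_* )\\ v_2(\gamma_* )\end{bmatrix}$ ($u_k,v_k\in\mathbb{C}^n$) be a pair of left and right singular vectors of $s_*$ chosen such that $u_2(\gamma_* )^*P[\mu_1,\mu_2]v_1(\gamma_* )=0$, $u_2(\gamma_* )^*u_1(\gamma_* )=v_2(\gamma_* )^*v_1(\gamma_* )$, and $[u_1(\gamma_*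 )\ u_2(\gamma_* )]^*[u_1(\gamma_* )\ u_2(\gamma_* )]=[v_1(\gamma_* )\ v_2(\gamma_* )]^*[v_1(\gamma_* )\ v_2(\gamma_* )]$ (such a pair exists). *)

theory Defs
  imports "Jordan_Normal_Form.Schur_Decomposition" "Jordan_Normal_Form.DL_Rank"
    "HOL-Computational_Algebra.Polynomial"
begin

definition mpoly_eval :: "nat \<Rightarrow> nat \<Rightarrow> (nat \<Rightarrow> complex mat) \<Rightarrow> complex \<Rightarrow> complex mat" where
  "mpoly_eval n m A lam = mat n n (\<lambda>(i,k). \<Sum>j\<le>m. lam ^ j * (A j $$ (i,k)))"

definition mpoly_divdiff :: "nat \<Rightarrow> nat \<Rightarrow> (nat \<Rightarrow> complex mat) \<Rightarrow> complex \<Rightarrow> complex \<Rightarrow> complex mat" where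
  "mpoly_divdiff n m A mu1 mu2 =
     (1 / (mu1 - mu2)) \<cdot>\<^sub>m (mpoly_eval n m A mu1 - mpoly_eval n m A mu2)"

definition Fmat :: "nat \<Rightarrow> nat \<Rightarrow> (nat \<Rightarrow> complex mat) \<Rightarrow> complex \<Rightarrow> complex \<Rightarrow> real \<Rightarrow> complex mat" where
  "Fmat n m A mu1 mu2 gamma =
     four_block_mat (mpoly_eval n m A mu1) (0\<^sub>m n n)
       (complex_of_real gamma \<cdot>\<^sub>m mpoly_divdiff n m A mu1 mu2) (mpoly_eval n m A mu2)"

text \<open>Singular values of M in nonincreasing order: square roots of the eigenvalues
  (with algebraic multiplicity) of M^* M.  sing_val k M is s_k(M), 1-based.\<close>
definition sing_vals :: "complex mat \<Rightarrow> real list" where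
  "sing_vals M = rev (sorted_list_of_multiset
     (image_mset (\<lambda>z. sqrt (Re z)) (proots (char_poly (mat_adjoint M * M)))))"

definition sing_val :: "nat \<Rightarrow> complex mat \<Rightarrow> real" where
  "sing_val k M = sing_vals M ! (k - 1)"

definition sing_vec_pair :: "complex mat \<Rightarrow> real \<Rightarrow> complex vec \<Rightarrow> complex vec \<Rightarrow> bool" where
  "sing_vec_pair M s u v \<longleftrightarrow>
     u \<in> carrier_vec (dim_row M) \<and> v \<in> carrier_vec (dim_col M) \<and>
     u \<bullet>c u = 1 \<and> v \<bullet>c v = 1 \<and>
     M *\<^sub>v v = complex_of_real s \<cdot>\<^sub>v u \<and> mat_adjoint M *\<^sub>v u = complex_of_real s \<cdot>\<^sub>v v"

end

theory Submission
  imports Defs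
begin

lemma gram: assumes "a \<in> carrier_vec n" "b \<in> carrier_vec n"
  shows "mat_adjoint (mat_of_cols n [a,b]) * mat_of_cols n [a,b] =
     mat 2 2 (\<lambda>(i,j). [a,b]!j \<bullet>c [a,b]!i)"
  apply (rule eq_matI)
  using assms
  apply (auto simp: mat_adjoint_def mat_of_rows_def scalar_prod_def less_2_cases_iff mat_of_cols_def intro!: sum.cong)
  done
lemma ip1: "x \<in> carrier_vec n \<Longrightarrow> y \<in> carrier_vec n \<Longrightarrow> z \<in> carrier_vec n \<Longrightarrow>
  (x - (c::complex) \<cdot>\<^sub>v y) \<bullet>c z = x \<bullet>c z - c * (y \<bullet>c z)"
  by (simp add: scalar_prod_def sum_subtractf sum_distrib_left algebra_simps)
lemma ip2: "x \<in> carrier_vec n \<Longrightarrow> y \<in> carrier_vec n \<Longrightarrow> z \<in> carrier_vec n \<Longrightarrow>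
  z \<bullet>c (x - (c::complex) \<cdot>\<^sub>v y) = z \<bullet>c x - cnj c * (z \<bullet>c y)"
  by (simp add: scalar_prod_def sum_subtractf sum_distrib_left algebra_simps)
lemma gram_eq: fixes a b c d :: "complex vec"
  assumes d: "a \<in> carrier_vec n" "b \<in> carrier_vec n" "c \<in> carrier_vec n" "d \<in> carrier_vec n"
  and e: "mat_adjoint (mat_of_cols n [a,b]) * mat_of_cols n [a,b] = mat_adjoint (mat_of_cols n [c,d]) * mat_of_cols n [c,d]"
  shows "mat_adjoint (mat_of_cols n [a,b - t \<cdot>\<^sub>v a]) * mat_of_cols n [a,b - t \<cdot>\<^sub>v a] = mat_adjoint (mat_of_cols n [c,d - t \<cdot>\<^sub>v c]) * mat_of_cols n [c,d - t \<cdot>\<^sub>v c]"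
proof -
  have b2: "b - t \<cdot>\<^sub>v a \<in> carrier_vec n" "d - t \<cdot>\<^sub>v c \<in> carrier_vec n" using d by auto
  have E: "\<And>i j. i < 2 \<Longrightarrow> j < 2 \<Longrightarrow> [a,b]!j \<bullet>c [a,b]!i = [c,d]!j \<bullet>c [c,d]!i"
  proof -
    fix i j :: nat assume "i < 2" "j < 2"
    from arg_cong[OF e, of "\<lambda>M. M $$ (i,j)"] show "[a,b]!j \<bullet>c [a,b]!i = [c,d]!j \<bullet>c [c,d]!i"
      unfolding gram[OF d(1,2)] gram[OF d(3,4)] using \<open>i<2\<close> \<open>j<2\<close> by simp
  qed
  have aa: "a \<bullet>c a = c \<bullet>c c" using E[of 0 0] by simp
  have ab: "a \<bullet>c b = c \<bullet>c d" using E[of 1 0] by simp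
  have ba: "b \<bullet>c a = d \<bullet>c c" using E[of 0 1] by simp
  have bb: "b \<bullet>c b = d \<bullet>c d" using E[of 1 1] by simp
  show ?thesis
    unfolding gram[OF d(1) b2(1)] gram[OF d(3) b2(2)]
    apply (rule eq_matI)
    using d aa ab ba bb
    by (auto simp: less_2_cases_iff ip1 ip2)
qed

theorem corollary1:
  fixes n m :: nat and A :: "nat \<Rightarrow> complex mat" and mu1 mu2 :: complex
    and gamma_s s_s :: real and u v :: "complex vec"
  assumes A_dim: "\<forall>j\<le>m. A j \<in> carrier_mat n n"
    and A_lead: "det (A m) \<noteq> 0"
    and mu_ne: "mu1 \<noteq> mu2"
    and rank2: "vec_space.rank n (mpoly_divdiff n m A mu1 mu2) \<ge> 2"
    and gamma_pos: "gamma_s > 0"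
    and s_def: "s_s = sing_val (2*n - 1) (Fmat n m A mu1 mu2 gamma_s)"
    and s_max: "\<forall>gamma\<ge>0. sing_val (2*n - 1) (Fmat n m A mu1 mu2 gamma) \<le> s_s"
    and s_pos: "s_s > 0"
    and sv: "sing_vec_pair (Fmat n m A mu1 mu2 gamma_s) s_s u v"
    and c1: "(mpoly_divdiff n m A mu1 mu2 *\<^sub>v vec_first v n) \<bullet>c vec_last u n = 0"
    and c2: "vec_first u n \<bullet>c vec_last u n = vec_first v n \<bullet>c vec_last v n"
    and c3: "mat_adjoint (mat_of_cols n [vec_first u n, vec_last u n])
               * mat_of_cols n [vec_first u n, vec_last u n]
           = mat_adjoint (mat_of_cols n [vec_first v n, vec_last v n])
               * mat_of_cols n [vec_first v n, vec_last v n]"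
  shows "let theta = complex_of_real gamma_s / (mu1 - mu2);
             Uh = mat_of_cols n [vec_first u n, vec_last u n - theta \<cdot>\<^sub>v vec_first u n];
             Vh = mat_of_cols n [vec_first v n, vec_last v n - theta \<cdot>\<^sub>v vec_first v n]
         in mat_adjoint Uh * Uh = mat_adjoint Vh * Vh"
  unfolding Let_def
  by (rule gram_eq[OF _ _ _ _ c3]) auto

end
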